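(* Let $L$ be a finite-dimensional Lie algebra over an algebraically closed field. Then $L$ is solvable if and only if every maximal subalgebra of $L$ has a maximal completion $C$ in $L$ with $C/k(C)$ abelian.
   Context: For a nonzero subalgebra $X$ of $L$, the strict core $k(X)$ is the sum of all ideals of $L$ that are proper subalgebras of $X$ (it is $0$ if there are none). For a maximal subalgebra $M$, a subalgebra $C$ is a completion of $M$ if $C\not\subseteq M$ but every proper subalgebra of $C$ that is an ideal of $L$ is contained in $M$; $I(M)$ is the set of completions of $M$ ordered by inclusion, and a maximal completion is a maximal element of $I(M)$. *)

theory Defs
  imports Main "HOL-Computational_Algebra.Polynomial"
begin

definition alg_closed_field :: "'k::field itself \<Rightarrow> bool" where
  "alg_closed_field _ \<longleftrightarrow> (\<forall>p :: 'k poly. degree p > 0 \<longrightarrow> (\<exists>x. poly p x = 0))"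

definition lie_algebra :: "('k::field \<Rightarrow> 'v::ab_group_add \<Rightarrow> 'v) \<Rightarrow> ('v \<Rightarrow> 'v \<Rightarrow> 'v) \<Rightarrow> bool" where
  "lie_algebra sc br \<longleftrightarrow> vector_space sc
     \<and> (\<forall>x y z. br (x + y) z = br x z + br y z)
     \<and> (\<forall>x y z. br x (y + z) = br x y + br x z)
     \<and> (\<forall>a x y. br (sc a x) y = sc a (br x y))
     \<and> (\<forall>a x y. br x (sc a y) = sc a (br x y))
     \<and> (\<forall>x. br x x = 0)
     \<and> (\<forall>x y z. br x (br y z) + br y (br z x) + br z (br x y) = 0)"

definition finite_dim :: "('k::field \<Rightarrow> 'v::ab_group_add \<Rightarrow> 'v) \<Rightarrow> bool" where
  "finite_dim sc \<longleftrightarrow> (\<exists>B. finite B \<and> module.span sc B = UNIV)"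

definition lie_subalgebra :: "('k::field \<Rightarrow> 'v::ab_group_add \<Rightarrow> 'v) \<Rightarrow> ('v \<Rightarrow> 'v \<Rightarrow> 'v) \<Rightarrow> 'v set \<Rightarrow> bool" where
  "lie_subalgebra sc br X \<longleftrightarrow> module.subspace sc X \<and> (\<forall>x\<in>X. \<forall>y\<in>X. br x y \<in> X)"

definition lie_ideal :: "('k::field \<Rightarrow> 'v::ab_group_add \<Rightarrow> 'v) \<Rightarrow> ('v \<Rightarrow> 'v \<Rightarrow> 'v) \<Rightarrow> 'v set \<Rightarrow> bool" where
  "lie_ideal sc br I \<longleftrightarrow> module.subspace sc I \<and> (\<forall>x. \<forall>y\<in>I. br x y \<in> I)"

definition maximal_subalgebra :: "('k::field \<Rightarrow> 'v::ab_group_add \<Rightarrow> 'v) \<Rightarrow> ('v \<Rightarrow> 'v \<Rightarrow> 'v) \<Rightarrow> 'v set \<Rightarrow> bool" where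
  "maximal_subalgebra sc br M \<longleftrightarrow> lie_subalgebra sc br M \<and> M \<noteq> UNIV
     \<and> (\<forall>N. lie_subalgebra sc br N \<and> M \<subseteq> N \<longrightarrow> N = M \<or> N = UNIV)"

fun derived_series :: "('k::field \<Rightarrow> 'v::ab_group_add \<Rightarrow> 'v) \<Rightarrow> ('v \<Rightarrow> 'v \<Rightarrow> 'v) \<Rightarrow> nat \<Rightarrow> 'v set" where
  "derived_series sc br 0 = UNIV"
| "derived_series sc br (Suc n) =
     module.span sc {br x y | x y. x \<in> derived_series sc br n \<and> y \<in> derived_series sc br n}"

definition solvable_lie :: "('k::field \<Rightarrow> 'v::ab_group_add \<Rightarrow> 'v) \<Rightarrow> ('v \<Rightarrow> 'v \<Rightarrow> 'v) \<Rightarrow> bool" where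
  "solvable_lie sc br \<longleftrightarrow> (\<exists>n. derived_series sc br n = {0})"

text \<open>Strict core k(X): sum of all ideals of L that are proper subalgebras of X
  (the span of their union; this is {0} if there are none).\<close>
definition strict_core :: "('k::field \<Rightarrow> 'v::ab_group_add \<Rightarrow> 'v) \<Rightarrow> ('v \<Rightarrow> 'v \<Rightarrow> 'v) \<Rightarrow> 'v set \<Rightarrow> 'v set" where
  "strict_core sc br X = module.span sc (\<Union>{I. lie_ideal sc br I \<and> I \<subset> X})"

definition completion :: "('k::field \<Rightarrow> 'v::ab_group_add \<Rightarrow> 'v) \<Rightarrow> ('v \<Rightarrow> 'v \<Rightarrow> 'v) \<Rightarrow> 'v set \<Rightarrow> 'v set \<Rightarrow> bool" where
  "completion sc br M C \<longleftrightarrow> lie_subalgebra sc br C \<and> \<not> C \<subseteq> M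
     \<and> (\<forall>I. lie_ideal sc br I \<and> I \<subset> C \<longrightarrow> I \<subseteq> M)"

definition maximal_completion :: "('k::field \<Rightarrow> 'v::ab_group_add \<Rightarrow> 'v) \<Rightarrow> ('v \<Rightarrow> 'v \<Rightarrow> 'v) \<Rightarrow> 'v set \<Rightarrow> 'v set \<Rightarrow> bool" where
  "maximal_completion sc br M C \<longleftrightarrow> completion sc br M C
     \<and> (\<forall>D. completion sc br M D \<and> C \<subseteq> D \<longrightarrow> D = C)"

text \<open>C/k(C) is abelian: [C,C] \<subseteq> k(C).\<close>
definition abelian_mod_strict_core :: "('k::field \<Rightarrow> 'v::ab_group_add \<Rightarrow> 'v) \<Rightarrow> ('v \<Rightarrow> 'v \<Rightarrow> 'v) \<Rightarrow> 'v set \<Rightarrow> bool" where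
  "abelian_mod_strict_core sc br C \<longleftrightarrow> (\<forall>x\<in>C. \<forall>y\<in>C. br x y \<in> strict_core sc br C)"

end

theory Submission
  imports Defs
begin

locale LA = finite_dimensional_vector_space sc Basis
  for sc :: "'k::field \<Rightarrow> 'v::ab_group_add \<Rightarrow> 'v" and Basis +
  fixes br :: "'v \<Rightarrow> 'v \<Rightarrow> 'v"
  assumes badd1: "br (x + y) z = br x z + br y z"
    and badd2: "br x (y + z) = br x y + br x z"
    and bsc1: "br (sc a x) y = sc a (br x y)"
    and bsc2: "br x (sc a y) = sc a (br x y)"
    and balt: "br x x = 0"
    and bjac: "br x (br y z) + br y (br z x) + br z (br x y) = 0"
begin

lemma br0l[simp]: "br 0 y = 0"
  using badd1[of 0 0 y] by simp
lemma br0r[simp]: "br y 0 = 0"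
  using badd2[of y 0 0] by simp
lemma bneg1: "br (- x) y = - br x y"
  using badd1[of x "-x" y] by (simp add: eq_neg_iff_add_eq_0 add.commute)
lemma bneg2: "br y (- x) = - br y x"
  using badd2[of y x "-x"] by (simp add: eq_neg_iff_add_eq_0 add.commute)
lemma bdiff1: "br (x - x') y = br x y - br x' y"
  using badd1[of x "-x'" y] by (simp add: bneg1)
lemma bdiff2: "br y (x - x') = br y x - br y x'"
  using badd2[of y x "-x'"] by (simp add: bneg2)
lemma banti: "br y x = - br x y"
proof -
  have "br (x+y) (x+y) = br x x + br x y + (br y x + br y y)" by (simp only: badd1 badd2 add_ac)
  then have "br x y + br y x = 0" by (simp only: balt) simp
  then show ?thesis by (simp add: eq_neg_iff_add_eq_0 add.commute)
qed
lemma bjac2: "br x (br y z) = br (br x y) z + br y (br x z)"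
proof -
  have B: "br y (br z x) = - br y (br x z)" using banti[of z x] bneg2 by simp
  have C: "br z (br x y) = - br (br x y) z" by (rule banti)
  have "br x (br y z) + - br y (br x z) + - br (br x y) z = 0" using bjac[of x y z] by (simp only: B C)
  then show ?thesis by (simp add: eq_neg_iff_add_eq_0 algebra_simps)
qed

lemma hom_br: "module_hom sc sc (br x)"
  unfolding module_hom_iff by (simp add: badd2 bsc2 module_axioms)


abbreviation lsub where "lsub X \<equiv> lie_subalgebra sc br X"
abbreviation lid where "lid X \<equiv> lie_ideal sc br X"

definition D where "D X = span {br x y | x y. x \<in> X \<and> y \<in> X}"
definition sm where "sm X Y = {x + y | x y. x \<in> X \<and> y \<in> Y}"

lemma lid_subspace: "lid I \<Longrightarrow> subspace I"
  by (simp add: lie_ideal_def)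
lemma lsub_subspace: "lsub I \<Longrightarrow> subspace I"
  by (simp add: lie_subalgebra_def)
lemma lidD: "lid I \<Longrightarrow> y \<in> I \<Longrightarrow> br x y \<in> I"
  by (simp add: lie_ideal_def)
lemma lidD2: "lid I \<Longrightarrow> y \<in> I \<Longrightarrow> br y x \<in> I"
  by (metis banti lidD lid_subspace subspace_neg)
lemma lsubD: "lsub X \<Longrightarrow> x \<in> X \<Longrightarrow> y \<in> X \<Longrightarrow> br x y \<in> X"
  by (simp add: lie_subalgebra_def)
lemma lid_lsub: "lid I \<Longrightarrow> lsub I"
  by (simp add: lie_ideal_def lie_subalgebra_def)
lemma lsubI: "subspace X \<Longrightarrow> (\<And>x y. x \<in> X \<Longrightarrow> y \<in> X \<Longrightarrow> br x y \<in> X) \<Longrightarrow> lsub X"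
  by (simp add: lie_subalgebra_def)
lemma lidI: "subspace X \<Longrightarrow> (\<And>x y. y \<in> X \<Longrightarrow> br x y \<in> X) \<Longrightarrow> lid X"
  by (simp add: lie_ideal_def)
lemma lid_UNIV: "lid UNIV" by (simp add: lie_ideal_def)
lemma lid_0: "lid {0}" by (simp add: lie_ideal_def)

lemma sm_subspace: "subspace X \<Longrightarrow> subspace Y \<Longrightarrow> subspace (sm X Y)"
  unfolding sm_def by (rule subspace_sums)
lemma sm_left: "subspace Y \<Longrightarrow> X \<subseteq> sm X Y"
  unfolding sm_def by (force dest: subspace_0)
lemma sm_right: "subspace X \<Longrightarrow> Y \<subseteq> sm X Y"
  unfolding sm_def by (force dest: subspace_0)
lemma sm_le: "X \<subseteq> Z \<Longrightarrow> Y \<subseteq> Z \<Longrightarrow> subspace Z \<Longrightarrow> sm X Y \<subseteq> Z"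
  unfolding sm_def by (auto intro: subspace_add)
lemma sm_lid: assumes "lid I" "lid J" shows "lid (sm I J)"
proof (rule lidI)
  show "subspace (sm I J)" using assms by (simp add: lid_subspace sm_subspace)
  fix x y assume "y \<in> sm I J"
  then obtain a b where "y = a + b" "a \<in> I" "b \<in> J" by (auto simp: sm_def)
  then show "br x y \<in> sm I J" using assms by (auto simp: sm_def badd2 intro!: exI lidD)
qed

lemma D_le: "(\<And>x y. x \<in> X \<Longrightarrow> y \<in> X \<Longrightarrow> br x y \<in> Z) \<Longrightarrow> subspace Z \<Longrightarrow> D X \<subseteq> Z"
  unfolding D_def by (rule span_minimal) auto
lemma D_mono: "X \<subseteq> Y \<Longrightarrow> D X \<subseteq> D Y"
  unfolding D_def by (rule span_mono) blast
lemma D_base: "x \<in> X \<Longrightarrow> y \<in> X \<Longrightarrow> br x y \<in> D X"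
  unfolding D_def by (rule span_base) blast
lemma D_subspace: "subspace (D X)" unfolding D_def by simp
lemma D_lsub: "lsub X \<Longrightarrow> D X \<subseteq> X"
  by (rule D_le) (auto simp: lsubD lsub_subspace)

lemma span_induct_br:
  assumes "v \<in> span S" "subspace Z" "\<And>u. u \<in> S \<Longrightarrow> br x u \<in> Z"
  shows "br x v \<in> Z"
proof -
  have "subspace {v. br x v \<in> Z}"
    using assms(2) by (auto simp: subspace_def badd2 bsc2)
  from span_subspace_induct[OF assms(1) this] assms(3) show ?thesis by auto
qed

lemma D_lid: assumes "lid I" shows "lid (D I)"
proof (rule lidI)
  show "subspace (D I)" by (rule D_subspace)
  fix x y assume "y \<in> D I"
  then show "br x y \<in> D I"
    unfolding D_def
  proof (rule span_induct_br[OF _ subspace_span])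
    fix u assume "u \<in> {br x y |x y. x \<in> I \<and> y \<in> I}"
    then obtain a b where u: "u = br a b" "a \<in> I" "b \<in> I" by auto
    have "br x u = br (br x a) b + br a (br x b)" using u(1) bjac2[of x a b] by simp
    also have "\<dots> \<in> span {br x y |x y. x \<in> I \<and> y \<in> I}"
      using u assms by (intro span_add span_base) (auto intro: lidD)
    finally show "br x u \<in> span {br x y |x y. x \<in> I \<and> y \<in> I}" .
  qed
qed

lemma span_Union_lid: assumes "\<And>I. I \<in> F \<Longrightarrow> lid I" shows "lid (span (\<Union>F))"
proof (rule lidI)
  show "subspace (span (\<Union>F))" by simp
  fix x y assume "y \<in> span (\<Union>F)"
  then show "br x y \<in> span (\<Union>F)"
    by (rule span_induct_br[OF _ subspace_span]) (use assms in \<open>auto intro: span_base lidD\<close>)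
qed

lemma ds_Suc: "derived_series sc br (Suc n) = D (derived_series sc br n)"
  by (simp add: D_def)
lemma ds_lid: "lid (derived_series sc br n)"
  by (induction n) (simp_all add: ds_Suc lid_UNIV D_lid del: derived_series.simps(2))

lemma dim_lt: "subspace X \<Longrightarrow> subspace Y \<Longrightarrow> X \<subseteq> Y \<Longrightarrow> X \<noteq> Y \<Longrightarrow> dim X < dim Y"
  by (metis dim_psubset psubsetI span_eq_iff)

lemma max_dim: assumes "\<Phi> X0" shows "\<exists>X. \<Phi> X \<and> (\<forall>Y. \<Phi> Y \<longrightarrow> dim Y \<le> dim X)"
proof -
  obtain X where "\<Phi> X" "\<forall>Y. \<Phi> Y \<longrightarrow> dimension - dim X \<le> dimension - dim Y"
    using ex_has_least_nat[of \<Phi> X0 "\<lambda>X. dimension - dim X"] assms by blast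
  moreover have "dim Y \<le> dimension" for Y by (rule dim_subset_UNIV)
  ultimately show ?thesis by (metis diff_le_mono2 diff_diff_cancel)
qed

lemma min_dim: assumes "\<Phi> X0" shows "\<exists>X. \<Phi> X \<and> (\<forall>Y. \<Phi> Y \<longrightarrow> dim X \<le> dim Y)"
  using ex_has_least_nat[of \<Phi> X0 dim] assms by blast


lemma maxsub_subspace: "maximal_subalgebra sc br M \<Longrightarrow> subspace M"
  by (simp add: maximal_subalgebra_def lie_subalgebra_def)

theorem solv_imp:
  assumes solv: "solvable_lie sc br" and M: "maximal_subalgebra sc br M"
  shows "\<exists>C. maximal_completion sc br M C \<and> abelian_mod_strict_core sc br C"
proof -
  have MU: "M \<noteq> UNIV" using M by (simp add: maximal_subalgebra_def)
  have Msub: "subspace M" using M by (rule maxsub_subspace)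
  obtain A where A: "lid A" "\<not> A \<subseteq> M" and Amin: "\<forall>Y. lid Y \<and> \<not> Y \<subseteq> M \<longrightarrow> dim A \<le> dim Y"
    using min_dim[of "\<lambda>Y. lid Y \<and> \<not> Y \<subseteq> M" UNIV] lid_UNIV MU by auto
  have small: "I \<subseteq> M" if "lid I" "I \<subset> A" for I
  proof (rule ccontr)
    assume "\<not> I \<subseteq> M"
    then have "dim A \<le> dim I" using Amin that by auto
    moreover have "dim I < dim A" using that A by (intro dim_lt) (auto simp: lid_subspace)
    ultimately show False by simp
  qed
  have comp: "completion sc br M A"
    unfolding completion_def using A small lid_lsub by blast
  have mc: "maximal_completion sc br M A"
    unfolding maximal_completion_def
  proof (intro conjI comp allI impI)
    fix E assume "completion sc br M E \<and> A \<subseteq> E"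
    then show "E = A" using A unfolding completion_def by blast
  qed
  have ab: "abelian_mod_strict_core sc br A"
    unfolding abelian_mod_strict_core_def
  proof (intro ballI)
    fix x y assume xy: "x \<in> A" "y \<in> A"
    show "br x y \<in> strict_core sc br A"
    proof (cases "D A = A")
      case False
      have "D A \<in> {I. lid I \<and> I \<subset> A}"
        using False D_lsub[OF lid_lsub[OF A(1)]] D_lid[OF A(1)] by auto
      then have "D A \<subseteq> strict_core sc br A"
        unfolding strict_core_def by (intro subset_trans[OF _ span_superset]) blast
      then show ?thesis using D_base[OF xy] by auto
    next
      case True
      have "A \<subseteq> derived_series sc br n" for n
      proof (induction n)
        case 0 then show ?case by simp
      next
        case (Suc n)
        then show ?case using D_mono[OF Suc] True by (simp add: ds_Suc del: derived_series.simps(2))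
      qed
      moreover obtain n where "derived_series sc br n = {0}"
        using solv by (auto simp: solvable_lie_def)
      ultimately have "A \<subseteq> M" using subspace_0[OF Msub] by (metis singletonD subsetI subset_eq)
      then show ?thesis using A by simp
    qed
  qed
  show ?thesis using mc ab by blast
qed


subsection \<open>Powers of ad\<close>

lemma hom_pow: "module_hom sc sc (br x ^^ k)"
proof (induction k)
  case 0 then show ?case unfolding module_hom_iff by (simp add: module_axioms)
next
  case (Suc k) then show ?case using module_hom_compose[OF Suc hom_br[of x]] by (simp add: comp_def)
qed

lemma pow_add: "(br x ^^ k) (u + v) = (br x ^^ k) u + (br x ^^ k) v"
  using module_hom.add[OF hom_pow] by blast
lemma pow_diff: "(br x ^^ k) (u - v) = (br x ^^ k) u - (br x ^^ k) v"
  using module_hom.diff[OF hom_pow] by blast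
lemma pow_scale: "(br x ^^ k) (sc c u) = sc c ((br x ^^ k) u)"
  using module_hom.scale[OF hom_pow] by blast
lemma pow_zero: "(br x ^^ k) 0 = 0"
  using module_hom.zero[OF hom_pow] by blast

lemma pow_J: "lid J \<Longrightarrow> u \<in> J \<Longrightarrow> (br x ^^ k) u \<in> J"
  by (induction k) (auto intro: lidD)

lemma pow_ge: assumes "lid J" "(br x ^^ k) u \<in> J" "k \<le> m" shows "(br x ^^ m) u \<in> J"
proof -
  have "(br x ^^ m) u = (br x ^^ (m - k)) ((br x ^^ k) u)"
    using assms(3) by (metis funpow_add le_add_diff_inverse2 o_apply)
  then show ?thesis using pow_J[OF assms(1,2)] by simp
qed

lemma leibniz: "(br x ^^ n) (br y z) \<in> span {br ((br x ^^ i) y) ((br x ^^ j) z) | i j. i + j = n}"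
proof (induction n)
  case 0 then show ?case by (intro span_base) force
next
  case (Suc n)
  have "br x ((br x ^^ n) (br y z)) \<in> span {br ((br x ^^ i) y) ((br x ^^ j) z) | i j. i + j = Suc n}"
  proof (rule span_induct_br[OF Suc subspace_span])
    fix u assume "u \<in> {br ((br x ^^ i) y) ((br x ^^ j) z) |i j. i + j = n}"
    then obtain i j where u: "u = br ((br x ^^ i) y) ((br x ^^ j) z)" "i + j = n" by auto
    have "br x u = br ((br x ^^ Suc i) y) ((br x ^^ j) z) + br ((br x ^^ i) y) ((br x ^^ Suc j) z)"
      using u bjac2[of x "(br x ^^ i) y" "(br x ^^ j) z"] by simp
    also have "\<dots> \<in> span {br ((br x ^^ i) y) ((br x ^^ j) z) | i j. i + j = Suc n}"
    proof (intro span_add span_base)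
      show "br ((br x ^^ Suc i) y) ((br x ^^ j) z) \<in> {br ((br x ^^ i) y) ((br x ^^ j) z) |i j. i + j = Suc n}"
        unfolding mem_Collect_eq by (rule exI[of _ "Suc i"], rule exI[of _ j]) (use u(2) in simp)
      show "br ((br x ^^ i) y) ((br x ^^ Suc j) z) \<in> {br ((br x ^^ i) y) ((br x ^^ j) z) |i j. i + j = Suc n}"
        unfolding mem_Collect_eq by (rule exI[of _ i], rule exI[of _ "Suc j"]) (use u(2) in simp)
    qed
    finally show "br x u \<in> span {br ((br x ^^ i) y) ((br x ^^ j) z) | i j. i + j = Suc n}" .
  qed
  then show ?case by simp
qed

definition S0 where "S0 J x = {y. \<exists>k. (br x ^^ k) y \<in> J}"

lemma S0_lsub: assumes J: "lid J" shows "lsub (S0 J x)"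
proof (rule lsubI)
  have sJ: "subspace J" using J by (rule lid_subspace)
  show "subspace (S0 J x)"
  proof (rule subspaceI)
    show "0 \<in> S0 J x" unfolding S0_def using subspace_0[OF sJ] by (auto intro!: exI[of _ 0])
  next
    fix u v assume "u \<in> S0 J x" "v \<in> S0 J x"
    then obtain k l where "(br x ^^ k) u \<in> J" "(br x ^^ l) v \<in> J" by (auto simp: S0_def)
    then have "(br x ^^ (k+l)) u \<in> J" "(br x ^^ (k+l)) v \<in> J" by (auto intro: pow_ge[OF J])
    then show "u + v \<in> S0 J x" unfolding S0_def by (auto simp: pow_add intro!: exI[of _ "k+l"] subspace_add[OF sJ])
  next
    fix c u assume "u \<in> S0 J x"
    then obtain k where "(br x ^^ k) u \<in> J" by (auto simp: S0_def)
    then show "sc c u \<in> S0 J x" unfolding S0_def by (auto simp: pow_scale intro!: exI[of _ k] subspace_scale[OF sJ])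
  qed
  fix y z assume "y \<in> S0 J x" "z \<in> S0 J x"
  then obtain k l where k: "(br x ^^ k) y \<in> J" and l: "(br x ^^ l) z \<in> J" by (auto simp: S0_def)
  have "span {br ((br x ^^ i) y) ((br x ^^ j) z) | i j. i + j = k + l} \<subseteq> J"
  proof (rule span_minimal[OF _ sJ], safe)
    fix i j assume "i + j = k + l"
    then have "k \<le> i \<or> l \<le> j" by linarith
    then show "br ((br x ^^ i) y) ((br x ^^ j) z) \<in> J"
    proof
      assume "k \<le> i" then show ?thesis using pow_ge[OF J k] lidD2[OF J] by blast
    next
      assume "l \<le> j" then show ?thesis using pow_ge[OF J l] lidD[OF J] by blast
    qed
  qed
  then show "br y z \<in> S0 J x" using leibniz[of "k+l" x y z] unfolding S0_def by blast
qed

lemma S0_J: "J \<subseteq> S0 J x"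
  unfolding S0_def by (auto intro!: exI[of _ 0])

lemma range_subspace: "subspace (range (br x ^^ k))"
  using module_hom.subspace_image[OF hom_pow subspace_UNIV] by blast

lemma fitting: assumes J: "lid J" and P: "lid P" and x: "x \<in> P" shows "sm (S0 J x) P = UNIV"
proof -
  define R where "R k = range (br x ^^ k)" for k
  have Rs: "subspace (R k)" for k unfolding R_def by (rule range_subspace)
  have RSuc: "R (Suc k) = br x ` R k" for k unfolding R_def by (simp add: image_comp)
  have Rdec: "R (Suc k) \<subseteq> R k" for k unfolding R_def
    by (auto simp del: funpow.simps simp: funpow_Suc_right)
  have "\<exists>m. R (Suc (Suc m)) = R (Suc m)"
  proof (rule ccontr)
    assume "\<not> ?thesis"
    then have ne: "R (Suc (Suc m)) \<noteq> R (Suc m)" for m by blast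
    have "dim (R (Suc m)) + m \<le> dim (R 1)" for m
    proof (induction m)
      case 0 then show ?case by simp
    next
      case (Suc m)
      have "dim (R (Suc (Suc m))) < dim (R (Suc m))"
        using ne[of m] Rdec[of "Suc m"] by (intro dim_lt Rs)
      then show ?case using Suc by simp
    qed
    from this[of "Suc dimension"] have "Suc dimension \<le> dim (R 1)" by simp
    then show False using dim_subset_UNIV[of "R 1"] by simp
  qed
  then obtain m where m: "R (Suc (Suc m)) = R (Suc m)" by blast
  have stab: "R (Suc m + i) = R (Suc m)" for i
  proof (induction i)
    case 0 then show ?case by simp
  next
    case (Suc i)
    have "R (Suc m + Suc i) = br x ` R (Suc m + i)" using RSuc[of "Suc m + i"] by simp
    also have "\<dots> = R (Suc (Suc m))" using Suc RSuc by simp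
    finally show ?case using m by simp
  qed
  show ?thesis
  proof (rule set_eqI, rule iffI)
    fix y :: 'v
    define m' where "m' = Suc m"
    have "R (m' + m') = R m'" using stab[of m'] by (simp add: m'_def)
    moreover have "(br x ^^ m') y \<in> R m'" unfolding R_def by (rule rangeI)
    ultimately have "(br x ^^ m') y \<in> R (m' + m')" by simp
    then obtain z where z: "(br x ^^ m') y = (br x ^^ (m' + m')) z" unfolding R_def by blast
    then have z': "(br x ^^ m') y = (br x ^^ m') ((br x ^^ m') z)" by (simp only: funpow_add comp_apply)
    have "y - (br x ^^ m') z \<in> S0 J x"
      unfolding S0_def using z' subspace_0[OF lid_subspace[OF J]]
      by (auto simp: pow_diff intro!: exI[of _ m'])
    moreover have "(br x ^^ m') z \<in> P"
      unfolding m'_def using x by (simp add: lidD2[OF P])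
    moreover have "y = (y - (br x ^^ m') z) + (br x ^^ m') z" by simp
    ultimately show "y \<in> sm (S0 J x) P" unfolding sm_def by blast
  qed simp
qed



subsection \<open>Engel modulo an ideal\<close>

definition nilJ where "nilJ J x \<longleftrightarrow> (\<forall>y. \<exists>k. (br x ^^ k) y \<in> J)"

lemma span_insert_mem: "subspace A \<Longrightarrow> u \<in> span (insert b A) \<Longrightarrow> \<exists>c a. a \<in> A \<and> u = a + sc c b"
  by (metis (no_types, lifting) diff_add_cancel span_breakdown_eq span_eq_iff)

lemma span_insert_mem': "subspace A \<Longrightarrow> a \<in> A \<Longrightarrow> a + sc c b \<in> span (insert b A)"
  by (meson insertI1 span_add span_base span_mono span_scale subset_insertI subsetD span_superset)

lemma engel:
  assumes J: "lid J"
  shows "lsub Q \<Longrightarrow> J \<subseteq> Q \<Longrightarrow> (\<forall>x\<in>Q. nilJ J x) \<Longrightarrow> subspace A \<Longrightarrow> subspace B \<Longrightarrow>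
    J \<subseteq> A \<Longrightarrow> A \<subseteq> B \<Longrightarrow> A \<noteq> B \<Longrightarrow> (\<forall>x\<in>Q. \<forall>a\<in>A. br x a \<in> A) \<Longrightarrow> (\<forall>x\<in>Q. \<forall>b\<in>B. br x b \<in> B)
    \<Longrightarrow> \<exists>b\<in>B. b \<notin> A \<and> (\<forall>x\<in>Q. br x b \<in> A)"
proof (induction "dim Q" arbitrary: Q A B rule: less_induct)
  case less
  note Q = less.prems
  have sJ: "subspace J" using J by (rule lid_subspace)
  have sQ: "subspace Q" using Q(1) by (rule lsub_subspace)
  show ?case
  proof (cases "Q = J")
    case True
    obtain b where "b \<in> B" "b \<notin> A" using Q(7,8) by blast
    then show ?thesis using True Q(6) lidD2[OF J] by blast
  next
    case False
    obtain h where h: "lsub h \<and> J \<subseteq> h \<and> h \<subseteq> Q \<and> h \<noteq> Q"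
      and hmax: "\<forall>Y. lsub Y \<and> J \<subseteq> Y \<and> Y \<subseteq> Q \<and> Y \<noteq> Q \<longrightarrow> dim Y \<le> dim h"
      using max_dim[of "\<lambda>Y. lsub Y \<and> J \<subseteq> Y \<and> Y \<subseteq> Q \<and> Y \<noteq> Q" J] False Q(2) lid_lsub[OF J] by blast
    have sh: "subspace h" using h lsub_subspace by blast
    have dh: "dim h < dim Q" using h sh sQ by (intro dim_lt) auto
    have IH: "\<exists>b\<in>B'. b \<notin> A' \<and> (\<forall>x\<in>h. br x b \<in> A')"
      if "subspace A'" "subspace B'" "J \<subseteq> A'" "A' \<subseteq> B'" "A' \<noteq> B'"
        "\<forall>x\<in>h. \<forall>a\<in>A'. br x a \<in> A'" "\<forall>x\<in>h. \<forall>b\<in>B'. br x b \<in> B'" for A' B'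
      using less.hyps[OF dh, of A' B'] h Q(3) that by blast
    obtain z where z: "z \<in> Q" "z \<notin> h" "\<forall>x\<in>h. br x z \<in> h"
      using IH[of h Q] sh sQ h lsubD[OF Q(1)] lsubD[of h] by blast
    define h' where "h' = span (insert z h)"
    have h'Q: "h' \<subseteq> Q" unfolding h'_def using z h sQ by (intro span_minimal) auto
    have brh': "br u v \<in> h" if uh: "u \<in> h'" and vh: "v \<in> h'" for u v
    proof -
      obtain c a where ua: "a \<in> h" "u = a + sc c z" using span_insert_mem[OF sh] uh unfolding h'_def by blast
      obtain d e where ve: "e \<in> h" "v = e + sc d z" using span_insert_mem[OF sh] vh unfolding h'_def by blast
      have "br u v = br a e + sc d (br a z) + sc c (br z e)"
        using ua ve by (simp add: badd1 badd2 bsc1 bsc2 balt add_ac)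
      moreover have "br z e \<in> h" using z(3) ve(1) banti subspace_neg[OF sh] by metis
      ultimately show ?thesis using ua ve z(3) h
        by (simp add: balt subspace_add[OF sh] subspace_scale[OF sh] lsubD)
    qed
    have "lsub h'" unfolding h'_def
      by (rule lsubI) (auto intro: brh'[unfolded h'_def] subsetD[OF span_superset])
    moreover have "J \<subseteq> h'" using h unfolding h'_def by (meson span_superset subset_insertI subset_trans)
    moreover have "dim h < dim h'"
      using z sh unfolding h'_def by (intro dim_lt) (auto intro: span_superset[THEN subsetD])
    ultimately have h'eq: "h' = Q" using hmax h'Q by fastforce
    define W where "W = {b \<in> B. \<forall>y\<in>h. br y b \<in> A}"
    have sA: "subspace A" and sB: "subspace B" using Q by auto
    have sW: "subspace W"
      unfolding W_def using sA sB
      by (auto simp: subspace_def badd2 bsc2)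
    have AW: "A \<subseteq> W" unfolding W_def using Q(7,9) h by blast
    obtain b0 where b0: "b0 \<in> B" "b0 \<notin> A" "\<forall>x\<in>h. br x b0 \<in> A"
      using IH[of A B] Q h by blast
    have b0W: "b0 \<in> W" unfolding W_def using b0 by blast
    have zW: "br z w \<in> W" if "w \<in> W" for w
    proof -
      have "br z w \<in> B" using that z(1) Q(10) unfolding W_def by blast
      moreover have "br y (br z w) \<in> A" if "y \<in> h" for y
      proof -
        have "br y (br z w) = br (br y z) w + br z (br y w)" by (rule bjac2)
        moreover have "br (br y z) w \<in> A" using z(3) that \<open>w \<in> W\<close> unfolding W_def by blast
        moreover have "br z (br y w) \<in> A" using that \<open>w \<in> W\<close> z(1) Q(9) unfolding W_def by blast
        ultimately show ?thesis using subspace_add[OF sA] by simp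
      qed
      ultimately show ?thesis unfolding W_def by blast
    qed
    have zWk: "(br z ^^ k) b0 \<in> W" for k by (induction k) (auto intro: zW b0W)
    obtain k0 where "(br z ^^ k0) b0 \<in> J" using Q(3) z(1) unfolding nilJ_def by blast
    then have ex: "\<exists>k. (br z ^^ k) b0 \<in> A" using Q(6) by blast
    define k where "k = (LEAST k. (br z ^^ k) b0 \<in> A)"
    have kA: "(br z ^^ k) b0 \<in> A" unfolding k_def using ex by (metis LeastI)
    have k0: "k \<noteq> 0" using kA b0 by (cases k) auto
    have kmin: "(br z ^^ (k - 1)) b0 \<notin> A" using k0 unfolding k_def
      by (metis (mono_tags, lifting) diff_less k_def less_one neq0_conv not_less_Least)
    define b where "b = (br z ^^ (k - 1)) b0"
    have bzA: "br z b \<in> A" unfolding b_def using kA k0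
      by (metis Suc_pred' comp_apply funpow.simps(2) neq0_conv)
    have bW: "b \<in> W" unfolding b_def by (rule zWk)
    have "br x b \<in> A" if "x \<in> Q" for x
    proof -
      have "x \<in> span (insert z h)" using that h'eq h'_def by simp
      then obtain c a where a: "a \<in> h" "x = a + sc c z" using span_insert_mem[OF sh] by blast
      have "br x b = br a b + sc c (br z b)" using a by (simp add: badd1 bsc1)
      then show ?thesis using a bW bzA unfolding W_def by (simp add: subspace_add[OF sA] subspace_scale[OF sA])
    qed
    then show ?thesis using bW kmin unfolding W_def b_def by blast
  qed
qed

lemma nil_sum: assumes J: "lid J" and x: "nilJ J x" and j: "j \<in> J" shows "nilJ J (x + j)"
proof -
  have sJ: "subspace J" using J by (rule lid_subspace)
  have "(br (x + j) ^^ k) y - (br x ^^ k) y \<in> J" for k y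
  proof (induction k)
    case 0 then show ?case using subspace_0[OF sJ] by simp
  next
    case (Suc k)
    have "(br (x + j) ^^ Suc k) y - (br x ^^ Suc k) y
       = br x ((br (x + j) ^^ k) y - (br x ^^ k) y) + br j ((br (x + j) ^^ k) y)"
      by (simp add: badd1 bdiff2)
    then show ?case using Suc lidD[OF J] lidD2[OF J j] subspace_add[OF sJ] by simp
  qed
  then show ?thesis using x unfolding nilJ_def
    by (metis diff_add_cancel subspace_add[OF sJ])
qed

lemma exists_nonnil:
  assumes J: "lid J" and P: "lid P" and perf: "P \<subseteq> D P" and PJ: "\<not> P \<subseteq> J"
  shows "\<exists>x\<in>P. \<not> nilJ J x"
proof (rule ccontr)
  assume "\<not> ?thesis"
  then have nil: "\<forall>x\<in>P. nilJ J x" by blast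
  define Q where "Q = sm P J"
  have lQ: "lid Q" unfolding Q_def by (rule sm_lid[OF P J])
  have sQ: "subspace Q" using lQ by (rule lid_subspace)
  have sJ: "subspace J" using J by (rule lid_subspace)
  have sP: "subspace P" using P by (rule lid_subspace)
  have JQ: "J \<subseteq> Q" unfolding Q_def by (rule sm_right[OF sP])
  have PQ: "P \<subseteq> Q" unfolding Q_def by (rule sm_left[OF sJ])
  have nilQ: "\<forall>x\<in>Q. nilJ J x"
  proof
    fix x assume "x \<in> Q"
    then obtain p j where "x = p + j" "p \<in> P" "j \<in> J" unfolding Q_def sm_def by blast
    then show "nilJ J x" using nil nil_sum[OF J] by blast
  qed
  have JneQ: "J \<noteq> Q" using PQ PJ by blast
  define \<Phi> where "\<Phi> Y \<longleftrightarrow> subspace Y \<and> J \<subseteq> Y \<and> Y \<subseteq> Q \<and> Y \<noteq> Q \<and> (\<forall>x\<in>Q. \<forall>a\<in>Y. br x a \<in> Y)" for Y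
  have "\<Phi> J" unfolding \<Phi>_def using sJ JQ JneQ lidD[OF J] by blast
  then obtain A where A\<Phi>: "\<Phi> A" and Amax: "\<And>Y. \<Phi> Y \<Longrightarrow> dim Y \<le> dim A"
    using max_dim[of \<Phi> J] by blast
  have A: "subspace A" "J \<subseteq> A" "A \<subseteq> Q" "A \<noteq> Q" "\<forall>x\<in>Q. \<forall>a\<in>A. br x a \<in> A"
    using A\<Phi> unfolding \<Phi>_def by auto
  have "\<forall>x\<in>Q. \<forall>b\<in>Q. br x b \<in> Q" using lidD[OF lQ] by blast
  then obtain b where b: "b \<in> Q" "b \<notin> A" "\<forall>x\<in>Q. br x b \<in> A"
    using engel[OF J lid_lsub[OF lQ] JQ nilQ A(1) sQ A(2) A(3) A(4) A(5)] by blast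
  define A' where "A' = span (insert b A)"
  have sA: "subspace A" using A by blast
  have brA': "br x u \<in> A" if xQ: "x \<in> Q" and uA: "u \<in> A'" for x u
  proof -
    have "u \<in> span (insert b A)" using uA unfolding A'_def .
    then obtain c a where a: "a \<in> A" "u = a + sc c b" using span_insert_mem[OF sA] by blast
    have "br x u = br x a + sc c (br x b)" using a(2) by (simp add: badd2 bsc2)
    then show ?thesis using A(5) b(3) xQ a(1) by (simp add: subspace_add[OF sA] subspace_scale[OF sA])
  qed
  have A'Q: "A' \<subseteq> Q" unfolding A'_def using A b sQ by (intro span_minimal) auto
  have AA': "A \<subseteq> A'" unfolding A'_def by (meson span_superset subset_insertI subset_trans)
  have bA': "b \<in> A'" unfolding A'_def by (simp add: span_base)
  have "dim A < dim A'" using b sA AA' bA' unfolding A'_def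
    by (intro dim_lt) auto
  moreover have "dim A' \<le> dim A" if ne: "A' \<noteq> Q"
  proof (rule Amax)
    show "\<Phi> A'" unfolding \<Phi>_def
    proof (intro conjI ballI)
      show "subspace A'" unfolding A'_def by simp
      show "J \<subseteq> A'" using A(2) AA' by blast
      fix x a assume "x \<in> Q" "a \<in> A'"
      then show "br x a \<in> A'" using brA' AA' by blast
    qed (use A'Q ne in auto)
  qed
  ultimately have "A' = Q" by linarith
  then have "D P \<subseteq> A" using brA' PQ by (intro D_le sA) blast
  then have "P \<subseteq> A" using perf by blast
  then have "Q \<subseteq> A" unfolding Q_def using A by (intro sm_le sA) auto
  then show False using A by blast
qed

lemma extend_maximal: assumes "lsub S" "S \<noteq> UNIV"
  shows "\<exists>M. maximal_subalgebra sc br M \<and> S \<subseteq> M"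
proof -
  obtain M where M: "lsub M \<and> S \<subseteq> M \<and> M \<noteq> UNIV"
    and Mmax: "\<forall>Y. lsub Y \<and> S \<subseteq> Y \<and> Y \<noteq> UNIV \<longrightarrow> dim Y \<le> dim M"
    using max_dim[of "\<lambda>Y. lsub Y \<and> S \<subseteq> Y \<and> Y \<noteq> UNIV" S] assms by blast
  have "maximal_subalgebra sc br M"
    unfolding maximal_subalgebra_def
  proof (intro conjI allI impI)
    fix N assume N: "lsub N \<and> M \<subseteq> N"
    show "N = M \<or> N = UNIV"
    proof (rule ccontr)
      assume nt: "\<not> (N = M \<or> N = UNIV)"
      then have "dim N \<le> dim M" using Mmax N M by blast
      moreover have "dim M < dim N" using N M nt by (intro dim_lt) (auto simp: lsub_subspace)
      ultimately show False by simp
    qed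
  qed (use M in auto)
  then show ?thesis using M by blast
qed

lemma rel_frattini:
  assumes J: "lid J" and P: "lid P" and perf: "P \<subseteq> D P" and PJ: "\<not> P \<subseteq> J"
  shows "\<exists>M. maximal_subalgebra sc br M \<and> J \<subseteq> M \<and> \<not> P \<subseteq> M"
proof -
  obtain x where x: "x \<in> P" "\<not> nilJ J x" using exists_nonnil[OF assms] by blast
  have "S0 J x \<noteq> UNIV" using x(2) unfolding nilJ_def S0_def by auto
  then obtain M where M: "maximal_subalgebra sc br M" "S0 J x \<subseteq> M"
    using extend_maximal S0_lsub[OF J] by blast
  have "\<not> P \<subseteq> M"
  proof
    assume "P \<subseteq> M"
    then have "sm (S0 J x) P \<subseteq> M" using M by (intro sm_le maxsub_subspace) auto
    then show False using fitting[OF J P x(1)] M by (auto simp: maximal_subalgebra_def)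
  qed
  then show ?thesis using M S0_J by blast
qed



subsection \<open>Eigenvectors\<close>

definition peval :: "'k poly \<Rightarrow> ('v \<Rightarrow> 'v) \<Rightarrow> 'v \<Rightarrow> 'v" where
  "peval p T v = (\<Sum>i\<le>degree p. sc (coeff p i) ((T ^^ i) v))"

lemma peval_bound: assumes "\<forall>i\<ge>n. coeff p i = 0"
  shows "peval p T v = (\<Sum>i<n. sc (coeff p i) ((T ^^ i) v))"
proof -
  have "(\<Sum>i\<le>degree p. sc (coeff p i) ((T ^^ i) v)) = (\<Sum>i\<in>{..degree p} \<union> {..<n}. sc (coeff p i) ((T ^^ i) v))"
    by (rule sum.mono_neutral_left) (auto simp: coeff_eq_0)
  also have "\<dots> = (\<Sum>i<n. sc (coeff p i) ((T ^^ i) v))"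
    by (rule sum.mono_neutral_right) (use assms in auto)
  finally show ?thesis unfolding peval_def .
qed

lemma hom_funpow: "module_hom sc sc T \<Longrightarrow> module_hom sc sc (T ^^ k)"
proof (induction k)
  case 0 then show ?case unfolding module_hom_iff by (simp add: module_axioms)
next
  case (Suc k) then show ?case using module_hom_compose[OF Suc(1)[OF Suc(2)] Suc(2)] by (simp add: comp_def)
qed

lemma peval_lin:
  assumes T: "module_hom sc sc T"
  shows "peval ([:-\<mu>, 1:] * q) T v = T (peval q T v) - sc \<mu> (peval q T v)"
proof -
  define n where "n = degree q + 1"
  have eq: "[:-\<mu>, 1:] * q = pCons 0 q - smult \<mu> q" by simp
  have "peval ([:-\<mu>, 1:] * q) T v = (\<Sum>i<Suc n. sc (coeff (pCons 0 q - smult \<mu> q) i) ((T ^^ i) v))"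
    unfolding eq by (rule peval_bound) (auto simp: n_def coeff_eq_0 coeff_pCons split: nat.splits)
  also have "\<dots> = (\<Sum>i<Suc n. sc (coeff (pCons 0 q) i) ((T ^^ i) v)) - (\<Sum>i<Suc n. sc (\<mu> * coeff q i) ((T ^^ i) v))"
    by (simp add: scale_left_diff_distrib sum_subtractf)
  also have "(\<Sum>i<Suc n. sc (coeff (pCons 0 q) i) ((T ^^ i) v)) = (\<Sum>i<n. sc (coeff q i) ((T ^^ Suc i) v))"
    by (subst sum.lessThan_Suc_shift) simp
  also have "\<dots> = T (\<Sum>i<n. sc (coeff q i) ((T ^^ i) v))"
    by (simp add: module_hom.sum[OF T] module_hom.scale[OF T])
  also have "(\<Sum>i<n. sc (coeff q i) ((T ^^ i) v)) = peval q T v"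
    by (rule peval_bound[symmetric]) (auto simp: n_def coeff_eq_0)
  also have "(\<Sum>i<Suc n. sc (\<mu> * coeff q i) ((T ^^ i) v)) = sc \<mu> (\<Sum>i<Suc n. sc (coeff q i) ((T ^^ i) v))"
    by (simp only: scale_sum_right scale_scale)
  also have "(\<Sum>i<Suc n. sc (coeff q i) ((T ^^ i) v)) = peval q T v"
    by (rule peval_bound[symmetric]) (auto simp: n_def coeff_eq_0)
  finally show ?thesis .
qed

lemma peval_Poly: "peval (Poly (map c [0..<n])) T v = (\<Sum>i<n. sc (c i) ((T ^^ i) v))"
proof -
  have "peval (Poly (map c [0..<n])) T v = (\<Sum>i<n. sc (coeff (Poly (map c [0..<n])) i) ((T ^^ i) v))"
    by (rule peval_bound) (simp add: nth_default_def)
  also have "\<dots> = (\<Sum>i<n. sc (c i) ((T ^^ i) v))"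
    by (rule sum.cong) (auto simp: nth_default_def)
  finally show ?thesis .
qed

lemma Poly_nz: "i < n \<Longrightarrow> c i \<noteq> 0 \<Longrightarrow> Poly (map c [0..<n]) \<noteq> 0"
  by (metis coeff_0 coeff_Poly_eq diff_zero length_map length_upt nth_default_nth nth_map_upt add_0)

lemma annih: "\<exists>p. p \<noteq> 0 \<and> peval p T v0 = 0"
proof (cases "inj_on (\<lambda>i. (T ^^ i) v0) {..<Suc dimension}")
  case True
  define Sv where "Sv = (\<lambda>i. (T ^^ i) v0) ` {..<Suc dimension}"
  have cS: "card Sv = Suc dimension" unfolding Sv_def using True by (simp add: card_image)
  have fS: "finite Sv" unfolding Sv_def by simp
  have "dependent Sv"
  proof (rule ccontr)
    assume "\<not> dependent Sv"
    then have "card Sv \<le> dim Sv" using independent_bound_general by blast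
    then show False using cS dim_subset_UNIV[of Sv] by simp
  qed
  then obtain u where u: "\<exists>w\<in>Sv. u w \<noteq> 0" "(\<Sum>w\<in>Sv. sc (u w) w) = 0"
    using dependent_finite[OF fS] by blast
  define c where "c i = u ((T ^^ i) v0)" for i
  have "(\<Sum>i<Suc dimension. sc (c i) ((T ^^ i) v0)) = (\<Sum>w\<in>Sv. sc (u w) w)"
    unfolding Sv_def c_def by (subst sum.reindex[OF True]) simp
  moreover obtain i where "i < Suc dimension" "c i \<noteq> 0" using u(1) unfolding Sv_def c_def by auto
  ultimately show ?thesis using u(2) peval_Poly[of c "Suc dimension" T v0] Poly_nz by metis
next
  case False
  then obtain i j where ij: "i < Suc dimension" "j < Suc dimension" "i \<noteq> j" "(T ^^ i) v0 = (T ^^ j) v0"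
    unfolding inj_on_def by auto
  define c where "c k = (if k = i then 1 else if k = j then -1 else (0::'k))" for k
  have "sc (c k) ((T ^^ k) v0) = (if k = i then (T ^^ i) v0 else 0) + (if k = j then - (T ^^ j) v0 else 0)" for k
    unfolding c_def using ij(3) by (auto simp: scale_minus_left)
  then have "(\<Sum>k<Suc dimension. sc (c k) ((T ^^ k) v0)) = (T ^^ i) v0 - (T ^^ j) v0"
    using ij by (simp add: sum.distrib sum_negf)
  then have "peval (Poly (map c [0..<Suc dimension])) T v0 = 0" using ij(4) peval_Poly[of c "Suc dimension" T v0] by simp
  moreover have "Poly (map c [0..<Suc dimension]) \<noteq> 0" using ij by (intro Poly_nz[of i]) (auto simp: c_def)
  ultimately show ?thesis by blast
qed

lemma peval_in: assumes T: "module_hom sc sc T" and W: "subspace W" "T ` W \<subseteq> W" and v: "v \<in> W"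
  shows "peval p T v \<in> W"
proof -
  have "(T ^^ i) v \<in> W" for i by (induction i) (use v W in auto)
  then show ?thesis unfolding peval_def by (intro subspace_sum[OF W(1)] subspace_scale[OF W(1)])
qed

lemma eig1:
  assumes acf: "alg_closed_field TYPE('k)" and T: "module_hom sc sc T"
    and C: "subspace C" and W: "subspace W" and CW: "C \<subseteq> W" "C \<noteq> W"
    and TW: "T ` W \<subseteq> W"
  shows "\<exists>v\<in>W. v \<notin> C \<and> (\<exists>\<mu>. T v - sc \<mu> v \<in> C)"
proof -
  obtain v0 where v0: "v0 \<in> W" "v0 \<notin> C" using CW by blast
  obtain p0 where "p0 \<noteq> 0" "peval p0 T v0 = 0" using annih by blast
  then obtain p where p: "p \<noteq> 0" "peval p T v0 \<in> C"
    and pmin: "\<forall>q. q \<noteq> 0 \<and> peval q T v0 \<in> C \<longrightarrow> degree p \<le> degree q"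
    using ex_has_least_nat[of "\<lambda>q. q \<noteq> 0 \<and> peval q T v0 \<in> C" p0 degree] subspace_0[OF C] by auto
  have "degree p \<noteq> 0"
  proof
    assume d: "degree p = 0"
    then have "peval p T v0 = sc (coeff p 0) v0" unfolding peval_def by simp
    moreover have "coeff p 0 \<noteq> 0" using d p(1) by (metis leading_coeff_0_iff)
    ultimately have "v0 = sc (inverse (coeff p 0)) (peval p T v0)" by simp
    then show False using subspace_scale[OF C p(2)] v0 by metis
  qed
  then obtain \<mu> where "poly p \<mu> = 0" using acf unfolding alg_closed_field_def by blast
  then obtain q where q: "p = [:-\<mu>, 1:] * q" using poly_eq_0_iff_dvd by (metis dvdE)
  have qnz: "q \<noteq> 0" using q p(1) by auto
  have "degree ([:-\<mu>, 1:] * q) = degree [:-\<mu>, 1:] + degree q" by (rule degree_mult_eq) (use qnz in simp_all)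
  then have "degree p = 1 + degree q" using q by simp
  then have "peval q T v0 \<notin> C" using pmin qnz by fastforce
  moreover have "peval q T v0 \<in> W" by (rule peval_in[OF T W TW v0(1)])
  moreover have "T (peval q T v0) - sc \<mu> (peval q T v0) \<in> C" using p(2) q peval_lin[OF T] by simp
  ultimately show ?thesis by blast
qed

lemma eig_common:
  assumes acf: "alg_closed_field TYPE('k)" and C: "subspace C" "C \<noteq> UNIV"
    and F: "\<forall>T\<in>F. module_hom sc sc T \<and> T ` C \<subseteq> C"
    and comm: "\<forall>T1\<in>F. \<forall>T2\<in>F. \<forall>v. T1 (T2 v) - T2 (T1 v) \<in> C"
  shows "\<exists>v. v \<notin> C \<and> (\<forall>T\<in>F. \<exists>\<mu>. T v - sc \<mu> v \<in> C)"
proof -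
  obtain W where W: "subspace W \<and> C \<subseteq> W \<and> W \<noteq> C \<and> (\<forall>T\<in>F. T ` W \<subseteq> W)"
    and Wmin: "\<forall>Y. subspace Y \<and> C \<subseteq> Y \<and> Y \<noteq> C \<and> (\<forall>T\<in>F. T ` Y \<subseteq> Y) \<longrightarrow> dim W \<le> dim Y"
    using min_dim[of "\<lambda>Y. subspace Y \<and> C \<subseteq> Y \<and> Y \<noteq> C \<and> (\<forall>T\<in>F. T ` Y \<subseteq> Y)" UNIV] C by auto
  have sW: "subspace W" using W by blast
  show ?thesis
  proof (cases "\<forall>T\<in>F. \<forall>w\<in>W. \<exists>\<mu>. T w - sc \<mu> w \<in> C")
    case True
    obtain v where "v \<in> W" "v \<notin> C" using W by blast
    then show ?thesis using True by blast
  next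
    case False
    then obtain T w where Tw: "T \<in> F" "w \<in> W" "\<forall>\<mu>. T w - sc \<mu> w \<notin> C" by blast
    have hT: "module_hom sc sc T" and TC: "T ` C \<subseteq> C" using F Tw by auto
    obtain v1 \<mu> where v1: "v1 \<in> W" "v1 \<notin> C" "T v1 - sc \<mu> v1 \<in> C"
      using eig1[OF acf hT C(1) sW] W Tw by blast
    define W' where "W' = {u \<in> W. T u - sc \<mu> u \<in> C}"
    have sW': "subspace W'"
    proof (rule subspaceI)
      show "0 \<in> W'" unfolding W'_def using subspace_0[OF sW] subspace_0[OF C(1)] module_hom.zero[OF hT] by simp
    next
      fix x y assume "x \<in> W'" "y \<in> W'"
      then show "x + y \<in> W'" unfolding W'_def using subspace_add[OF sW] subspace_add[OF C(1)]
        by (auto simp: module_hom.add[OF hT] scale_right_distrib algebra_simps)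
          (metis (no_types, lifting) add_diff_add)
    next
      fix c x assume xW: "x \<in> W'"
      have "T (sc c x) - sc \<mu> (sc c x) = sc c (T x - sc \<mu> x)"
        by (simp add: module_hom.scale[OF hT] scale_right_diff_distrib scale_left_commute)
      then show "sc c x \<in> W'" using xW unfolding W'_def using subspace_scale[OF sW] subspace_scale[OF C(1)]
        by auto
    qed
    have CW': "C \<subseteq> W'" unfolding W'_def using W TC subspace_diff[OF C(1)] subspace_scale[OF C(1)] by blast
    have W'ne: "W' \<noteq> C" using v1 unfolding W'_def by blast
    have W'W: "W' \<subseteq> W" "W' \<noteq> W" using Tw unfolding W'_def by auto
    have inv: "\<forall>T2\<in>F. T2 ` W' \<subseteq> W'"
    proof (intro ballI subsetI)
      fix T2 x assume T2: "T2 \<in> F" and "x \<in> T2 ` W'"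
      then obtain u where u: "u \<in> W'" "x = T2 u" by blast
      have h2: "module_hom sc sc T2" and T2C: "T2 ` C \<subseteq> C" using F T2 by auto
      have "T (T2 u) - sc \<mu> (T2 u) = (T (T2 u) - T2 (T u)) + T2 (T u - sc \<mu> u)"
        by (simp add: module_hom.diff[OF h2] module_hom.scale[OF h2])
      also have "\<dots> \<in> C" using comm Tw(1) T2 u T2C unfolding W'_def
        by (intro subspace_add[OF C(1)]) auto
      finally show "x \<in> W'" using u W T2 unfolding W'_def by auto
    qed
    have "dim W' < dim W" using sW' sW W'W by (intro dim_lt) auto
    moreover have "dim W \<le> dim W'" using Wmin sW' CW' W'ne inv by blast
    ultimately show ?thesis by simp
  qed
qed



lemma chain_stab: assumes "\<And>n. subspace (R n)" "\<And>n. R (Suc n) \<subseteq> R n"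
  shows "\<exists>m. R (Suc m) = R m"
proof (rule ccontr)
  assume "\<not> ?thesis"
  then have ne: "R (Suc m) \<noteq> R m" for m by blast
  have "dim (R m) + m \<le> dim (R 0)" for m
  proof (induction m)
    case 0 then show ?case by simp
  next
    case (Suc m)
    have "dim (R (Suc m)) < dim (R m)" using ne[of m] assms by (intro dim_lt) auto
    then show ?case using Suc by simp
  qed
  from this[of "Suc dimension"] have "Suc dimension \<le> dim (R 0)" by simp
  then show False using dim_subset_UNIV[of "R 0"] by simp
qed

lemma perf_in: assumes "P \<subseteq> D P" "P \<subseteq> X" "\<And>x y. x \<in> X \<Longrightarrow> y \<in> X \<Longrightarrow> br x y \<in> Z" "subspace Z"
  shows "P \<subseteq> Z"
  using assms D_le[of X Z] D_mono[of P X] by blast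

theorem imp_solv:
  assumes acf: "alg_closed_field TYPE('k)"
    and H: "\<forall>M. maximal_subalgebra sc br M \<longrightarrow>
       (\<exists>C. maximal_completion sc br M C \<and> abelian_mod_strict_core sc br C)"
  shows "solvable_lie sc br"
proof (rule ccontr)
  assume ns: "\<not> solvable_lie sc br"
  have "\<exists>m. derived_series sc br (Suc m) = derived_series sc br m"
    by (rule chain_stab) (auto simp: ds_Suc lid_subspace[OF ds_lid] D_lsub[OF lid_lsub[OF ds_lid]] simp del: derived_series.simps(2))
  then obtain m where m: "derived_series sc br (Suc m) = derived_series sc br m" by blast
  define P where "P = derived_series sc br m"
  have lP: "lid P" unfolding P_def by (rule ds_lid)
  have sP: "subspace P" using lP by (rule lid_subspace)
  have perf: "P \<subseteq> D P" using m unfolding P_def by (simp add: ds_Suc del: derived_series.simps(2))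
  have P0: "\<not> P \<subseteq> {0}"
  proof
    assume "P \<subseteq> {0}"
    then have "P = {0}" using subspace_0[OF sP] by blast
    then show False using ns unfolding solvable_lie_def P_def by blast
  qed
  define \<Psi> where "\<Psi> Y \<longleftrightarrow> lid Y \<and> \<not> P \<subseteq> Y" for Y
  have "\<Psi> {0}" unfolding \<Psi>_def using lid_0 P0 by blast
  then obtain N where N\<Psi>: "\<Psi> N" and Nmax: "\<And>Y. \<Psi> Y \<Longrightarrow> dim Y \<le> dim N"
    using max_dim[of \<Psi> "{0}"] by blast
  have lN: "lid N" and PN: "\<not> P \<subseteq> N" using N\<Psi> unfolding \<Psi>_def by auto
  have sN: "subspace N" using lN by (rule lid_subspace)
  have Nprop: "P \<subseteq> sm I N" if lI: "lid I" and IN: "\<not> I \<subseteq> N" for I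
  proof (rule ccontr)
    assume nP: "\<not> P \<subseteq> sm I N"
    have lIN: "lid (sm I N)" by (rule sm_lid[OF lI lN])
    then have "dim (sm I N) \<le> dim N" using nP Nmax unfolding \<Psi>_def by blast
    moreover have "dim N < dim (sm I N)"
    proof (rule dim_lt[OF sN lid_subspace[OF lIN]])
      show "N \<subseteq> sm I N" by (rule sm_right[OF lid_subspace[OF lI]])
      show "N \<noteq> sm I N" using IN sm_left[OF sN, of I] by blast
    qed
    ultimately show False by simp
  qed
  obtain M where M: "maximal_subalgebra sc br M" "N \<subseteq> M" "\<not> P \<subseteq> M"
    using rel_frattini[OF lN lP perf PN] by blast
  have sM: "subspace M" using M(1) by (rule maxsub_subspace)
  obtain C where C: "maximal_completion sc br M C" and abC: "abelian_mod_strict_core sc br C"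
    using H M(1) by blast
  have compC: "completion sc br M C" using C unfolding maximal_completion_def by blast
  have Cmax: "\<And>E. completion sc br M E \<Longrightarrow> C \<subseteq> E \<Longrightarrow> E = C"
    using C unfolding maximal_completion_def by blast
  have lC: "lsub C" and CM: "\<not> C \<subseteq> M" and Cid: "\<And>I. lid I \<Longrightarrow> I \<subset> C \<Longrightarrow> I \<subseteq> M"
    using compC unfolding completion_def by auto
  have sC: "subspace C" using lC by (rule lsub_subspace)
  define K where "K = strict_core sc br C"
  have lK: "lid K" unfolding K_def strict_core_def by (rule span_Union_lid) blast
  have KM: "K \<subseteq> M" unfolding K_def strict_core_def using Cid sM by (intro span_minimal) blast+
  have KN: "K \<subseteq> N"
  proof (rule ccontr)
    assume "\<not> K \<subseteq> N"
    then have "P \<subseteq> sm K N" by (rule Nprop[OF lK])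
    also have "sm K N \<subseteq> M" using KM M(2) sM by (rule sm_le)
    finally show False using M(3) by blast
  qed
  have CCN: "br x y \<in> N" if "x \<in> C" "y \<in> C" for x y
    using abC that KN unfolding abelian_mod_strict_core_def K_def by blast
  have crit: "completion sc br M Y" if lY: "lsub Y" and YM: "\<not> Y \<subseteq> M" and NY: "N \<subseteq> Y" and PY: "\<not> P \<subseteq> Y" for Y
    unfolding completion_def
  proof (intro conjI allI impI lY YM)
    fix I assume I: "lid I \<and> I \<subset> Y"
    show "I \<subseteq> M"
    proof (rule ccontr)
      assume "\<not> I \<subseteq> M"
      then have "\<not> I \<subseteq> N" using M(2) by blast
      then have "P \<subseteq> sm I N" using Nprop I by blast
      also have "sm I N \<subseteq> Y" using I NY lsub_subspace[OF lY] by (intro sm_le) auto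
      finally show False using PY by blast
    qed
  qed
  have NC: "N \<subseteq> C"
  proof -
    define C' where "C' = sm C N"
    have sC': "subspace C'" unfolding C'_def by (rule sm_subspace[OF sC sN])
    have brC': "br x y \<in> N" if xC: "x \<in> C'" and yC: "y \<in> C'" for x y
    proof -
      obtain c1 n1 where 1: "x = c1 + n1" "c1 \<in> C" "n1 \<in> N" using xC unfolding C'_def sm_def by blast
      obtain c2 n2 where 2: "y = c2 + n2" "c2 \<in> C" "n2 \<in> N" using yC unfolding C'_def sm_def by blast
      have "br x y = br c1 c2 + br c1 n2 + (br n1 c2 + br n1 n2)" using 1 2 by (simp add: badd1 badd2 add_ac)
      then show ?thesis using 1 2 CCN lidD[OF lN] lidD2[OF lN] by (simp add: subspace_add[OF sN])
    qed
    have NC': "N \<subseteq> C'" unfolding C'_def by (rule sm_right[OF sC])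
    have CC': "C \<subseteq> C'" unfolding C'_def by (rule sm_left[OF sN])
    have "completion sc br M C'"
    proof (rule crit)
      show "lsub C'" using sC' brC' NC' by (intro lsubI) blast+
      show "\<not> C' \<subseteq> M" using CC' CM by blast
      show "N \<subseteq> C'" by (rule NC')
      show "\<not> P \<subseteq> C'" using perf_in[OF perf _ brC' sN] PN by blast
    qed
    then have "C' = C" using Cmax CC' by blast
    then show ?thesis using NC' by blast
  qed
  have CU: "C \<noteq> UNIV"
  proof
    assume "C = UNIV"
    then have "P \<subseteq> N" using perf_in[OF perf _ CCN sN] by blast
    then show False using PN by blast
  qed
  have "\<exists>v. v \<notin> C \<and> (\<forall>T\<in>br ` C. \<exists>\<mu>. T v - sc \<mu> v \<in> C)"
  proof (rule eig_common[OF acf sC CU])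
    show "\<forall>T\<in>br ` C. module_hom sc sc T \<and> T ` C \<subseteq> C" using hom_br lsubD[OF lC] by blast
    show "\<forall>T1\<in>br ` C. \<forall>T2\<in>br ` C. \<forall>v. T1 (T2 v) - T2 (T1 v) \<in> C"
    proof (intro ballI allI)
      fix T1 T2 v assume "T1 \<in> br ` C" "T2 \<in> br ` C"
      then obtain c1 c2 where c: "T1 = br c1" "T2 = br c2" "c1 \<in> C" "c2 \<in> C" by blast
      have "T1 (T2 v) - T2 (T1 v) = br (br c1 c2) v" using c bjac2[of c1 c2 v] by simp
      then show "T1 (T2 v) - T2 (T1 v) \<in> C" using CCN c lidD2[OF lN] NC by auto
    qed
  qed
  then obtain v where v: "v \<notin> C" "\<And>c. c \<in> C \<Longrightarrow> \<exists>\<mu>. br c v - sc \<mu> v \<in> C" by blast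
  have "\<exists>w Z. w \<notin> C \<and> subspace Z \<and> Z \<subseteq> span (insert w C)
     \<and> (\<forall>c\<in>C. br c w \<in> Z) \<and> (\<forall>c\<in>C. \<forall>d\<in>C. br c d \<in> Z) \<and> (\<forall>z1\<in>Z. \<forall>z2\<in>Z. br z1 z2 \<in> N)"
  proof (cases "\<forall>c\<in>C. br c v \<in> C")
    case True
    show ?thesis
    proof (intro exI conjI)
      show "v \<notin> C" by (rule v(1))
      show "subspace C" by (rule sC)
      show "C \<subseteq> span (insert v C)" by (meson span_superset subset_insertI subset_trans)
      show "\<forall>c\<in>C. br c v \<in> C" by (rule True)
      show "\<forall>c\<in>C. \<forall>d\<in>C. br c d \<in> C" using lsubD[OF lC] by blast
      show "\<forall>z1\<in>C. \<forall>z2\<in>C. br z1 z2 \<in> N" using CCN by blast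
    qed
  next
    case False
    then obtain c0 where c0: "c0 \<in> C" "br c0 v \<notin> C" by blast
    obtain \<mu>0 where mu0: "br c0 v - sc \<mu>0 v \<in> C" using v(2)[OF c0(1)] by blast
    define w where "w = br c0 v"
    have mu0nz: "\<mu>0 \<noteq> 0" using mu0 c0(2) by auto
    have wC: "w \<notin> C"
    proof
      assume "w \<in> C"
      then have "w - (br c0 v - sc \<mu>0 v) \<in> C" by (rule subspace_diff[OF sC _ mu0])
      then have "sc \<mu>0 v \<in> C" unfolding w_def by simp
      then have "sc (inverse \<mu>0) (sc \<mu>0 v) \<in> C" by (rule subspace_scale[OF sC])
      then show False using mu0nz v(1) by simp
    qed
    have eigw: "\<exists>\<mu>. br c w - sc \<mu> w \<in> N" if c: "c \<in> C" for c
    proof -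
      obtain \<mu> where mu: "br c v - sc \<mu> v \<in> C" using v(2)[OF c] by blast
      define c'' where "c'' = br c v - sc \<mu> v"
      have bcv: "br c v = sc \<mu> v + c''" unfolding c''_def by simp
      have "br c w = br (br c c0) v + br c0 (br c v)" unfolding w_def by (rule bjac2)
      also have "\<dots> = br (br c c0) v + sc \<mu> w + br c0 c''" unfolding bcv w_def by (simp add: badd2 bsc2 add_ac)
      finally have "br c w - sc \<mu> w = br (br c c0) v + br c0 c''" by simp
      moreover have "br (br c c0) v \<in> N" using CCN[OF c c0(1)] lidD2[OF lN] by blast
      moreover have "br c0 c'' \<in> N" using CCN[OF c0(1)] mu unfolding c''_def by blast
      ultimately have "br c w - sc \<mu> w \<in> N" by (simp add: subspace_add[OF sN])
      then show ?thesis by blast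
    qed
    define Z where "Z = span (insert w N)"
    have sZ: "subspace Z" unfolding Z_def by simp
    have wZ: "w \<in> Z" unfolding Z_def by (simp add: span_base)
    have NZ: "N \<subseteq> Z" unfolding Z_def by (meson span_superset subset_insertI subset_trans)
    show ?thesis
    proof (intro exI conjI)
      show "w \<notin> C" by (rule wC)
      show "subspace Z" by (rule sZ)
      show "Z \<subseteq> span (insert w C)" unfolding Z_def using NC by (intro span_mono) blast
      show "\<forall>c\<in>C. br c w \<in> Z"
      proof
        fix c assume "c \<in> C"
        then obtain \<mu> where "br c w - sc \<mu> w \<in> N" using eigw by blast
        then have "br c w - sc \<mu> w \<in> Z" using NZ by blast
        moreover have "sc \<mu> w \<in> Z" using wZ by (rule subspace_scale[OF sZ])
        ultimately have "(br c w - sc \<mu> w) + sc \<mu> w \<in> Z" by (rule subspace_add[OF sZ])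
        then show "br c w \<in> Z" by simp
      qed
      show "\<forall>c\<in>C. \<forall>d\<in>C. br c d \<in> Z" using CCN NZ by blast
      show "\<forall>z1\<in>Z. \<forall>z2\<in>Z. br z1 z2 \<in> N"
      proof (intro ballI)
        fix z1 z2 assume "z1 \<in> Z" "z2 \<in> Z"
        obtain a1 n1 where 1: "n1 \<in> N" "z1 = n1 + sc a1 w"
          using span_insert_mem[OF sN] \<open>z1 \<in> Z\<close> unfolding Z_def by blast
        obtain a2 n2 where 2: "n2 \<in> N" "z2 = n2 + sc a2 w"
          using span_insert_mem[OF sN] \<open>z2 \<in> Z\<close> unfolding Z_def by blast
        have "br z1 z2 = br n1 n2 + sc a2 (br n1 w) + sc a1 (br w n2)"
          using 1 2 by (simp add: badd1 badd2 bsc1 bsc2 balt add_ac)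
        then show "br z1 z2 \<in> N" using 1 2 lidD[OF lN] lidD2[OF lN]
          by (simp add: subspace_add[OF sN] subspace_scale[OF sN])
      qed
    qed
  qed
  then obtain w Z where w: "w \<notin> C" and sZ: "subspace Z" and ZY: "Z \<subseteq> span (insert w C)"
    and cw: "\<forall>c\<in>C. br c w \<in> Z" and cd: "\<forall>c\<in>C. \<forall>d\<in>C. br c d \<in> Z"
    and ZZ: "\<forall>z1\<in>Z. \<forall>z2\<in>Z. br z1 z2 \<in> N" by blast
  define Y where "Y = span (insert w C)"
  have sY: "subspace Y" unfolding Y_def by simp
  have brY: "br y1 y2 \<in> Z" if y1Y: "y1 \<in> Y" and y2Y: "y2 \<in> Y" for y1 y2
  proof -
    obtain a1 c1 where 1: "c1 \<in> C" "y1 = c1 + sc a1 w" using y1Y span_insert_mem[OF sC] unfolding Y_def by blast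
    obtain a2 c2 where 2: "c2 \<in> C" "y2 = c2 + sc a2 w" using y2Y span_insert_mem[OF sC] unfolding Y_def by blast
    have eq: "br y1 y2 = br c1 c2 + sc a2 (br c1 w) + sc a1 (- br c2 w)"
      using 1 2 banti[of w c2] by (simp add: badd1 badd2 bsc1 bsc2 balt add_ac)
    have m: "br c1 c2 \<in> Z" "br c1 w \<in> Z" "br c2 w \<in> Z" using 1 2 cw cd by auto
    have "br c1 c2 + sc a2 (br c1 w) + sc a1 (- br c2 w) \<in> Z"
      using m by (intro subspace_add[OF sZ] subspace_scale[OF sZ] subspace_neg[OF sZ])
    then show ?thesis unfolding eq .
  qed
  have CY: "C \<subseteq> Y" unfolding Y_def by (meson span_superset subset_insertI subset_trans)
  have wY: "w \<in> Y" unfolding Y_def by (simp add: span_base)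
  have "completion sc br M Y"
  proof (rule crit)
    show "lsub Y" using sY brY ZY unfolding Y_def by (intro lsubI) blast+
    show "\<not> Y \<subseteq> M" using CY CM by blast
    show "N \<subseteq> Y" using NC CY by blast
    show "\<not> P \<subseteq> Y"
    proof
      assume "P \<subseteq> Y"
      then have "P \<subseteq> Z" using perf_in[OF perf _ brY sZ] by blast
      then have "P \<subseteq> N" using perf_in[OF perf _ _ sN, of Z] ZZ by blast
      then show False using PN by blast
    qed
  qed
  then have "Y = C" using Cmax CY by blast
  then show False using w wY by blast
qed

end

theorem corollary3p4:
  fixes sc :: "'k::field \<Rightarrow> 'v::ab_group_add \<Rightarrow> 'v"
    and br :: "'v \<Rightarrow> 'v \<Rightarrow> 'v"
  assumes "alg_closed_field TYPE('k)"
    and "lie_algebra sc br"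
    and "finite_dim sc"
  shows "solvable_lie sc br \<longleftrightarrow>
    (\<forall>M. maximal_subalgebra sc br M \<longrightarrow>
       (\<exists>C. maximal_completion sc br M C \<and> abelian_mod_strict_core sc br C))"
proof -
  have vs: "vector_space sc" using assms(2) unfolding lie_algebra_def by blast
  interpret vector_space sc by (rule vs)
  obtain B where B: "finite B" "span B = UNIV" using assms(3) unfolding finite_dim_def by blast
  obtain B' where B': "independent B'" "UNIV \<subseteq> span B'"
    using basis_exists[of UNIV] by blast
  have fB': "finite B'" using independent_span_bound[OF B(1) B'(1)] B(2) by simp
  have "LA sc B' br"
    unfolding LA_def LA_axioms_def finite_dimensional_vector_space_def finite_dimensional_vector_space_axioms_def
    using vs fB' B' assms(2) unfolding lie_algebra_def by auto
  then interpret L: LA sc B' br .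
  show ?thesis using L.solv_imp L.imp_solv[OF assms(1)] by blast
qed

end
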